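(* Let $X$ be a measurable separable Banach space and $Y$ a measurable separable Banach space. Let $(\bar X,\bar Y)$ be an $X\times Y$-valued random variable with joint law $\mu$, let $\sigma$ be the law of $\bar Y$, and let $y\mapsto \pi_y$ be the posterior, i.e. $\pi_y$ is the conditional law of $\bar X$ given $\bar Y=y$, so that $\mu=\pi_{\bar Y}\otimes\sigma$. Let $\mathcal{G}\colon Y\to\mathcal{P}_X$ be a map assigning to each $y\in Y$ a probability measure $\mathcal{G}(y)$ on $X$, and assume that $y\mapsto \mathcal{W}(\mathcal{G}(y),\pi_y)$ is a measurable real-valued function on $Y$. Then \[ \mathbb{E}_{\bar Y\sim\sigma}\Bigl[\sup_{D_{\bar Y}\in \mathrm{Lip}(X)} \mathbb{E}_{\bar X'\sim \pi_{\bar Y},\ \bar V\sim\mathcal{G}(\bar Y)}\bigl[D_{\bar Y}(\bar X')-D_{\bar Y}(\bar V)\bigr]\Bigr] =\sup_{D\in \mathcal{D}(X\times Y)} \mathbb{E}_{(\bar X,\bar Y)\sim\mu,\ \bar V\sim\mathcal{G}(\bar Y)}\bigl[D(\bar X,\bar Y)-D(\bar V,\bar Y)\bigr]. \]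
   Context: $\mathcal{P}_X$ denotes the set of probability measures on $X$ for which the Wasserstein 1-distance is finite (the Wasserstein space). The Wasserstein 1-distance is $\mathcal{W}(p,q)=\inf_{\gamma\in\Pi(p,q)}\mathbb{E}_{(u,v)\sim\gamma}[\|u-v\|_X]$, where $\Pi(p,q)$ is the set of couplings of $p$ and $q$. $\mathrm{Lip}(X)$ denotes the set of real-valued $1$-Lipschitz maps on $X$, i.e. $|D(x_1)-D(x_2)|\le\|x_1-x_2\|_X$ for all $x_1,x_2\in X$. $\mathcal{D}(X\times Y)$ denotes the set of measurable maps $D\colon X\times Y\to\mathbb{R}$ such that $D(\cdot,y)\in\mathrm{Lip}(X)$ for every $y\in Y$. In the expectations, $\bar V\sim\mathcal{G}(\bar Y)$ means that conditionally on $\bar Y$, $\bar V$ is drawn from $\mathcal{G}(\bar Y)$. *)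

theory Defs
  imports "HOL-Probability.Probability"
begin

definition wasserstein_space :: "'a::{banach,second_countable_topology} measure set" where
  "wasserstein_space = {p. prob_space p \<and> sets p = sets borel \<and> (\<integral>\<^sup>+ x. ennreal (norm x) \<partial>p) < \<infinity>}"

definition couplings :: "'a::{banach,second_countable_topology} measure \<Rightarrow> 'a measure \<Rightarrow> ('a \<times> 'a) measure set" where
  "couplings p q = {\<gamma>. prob_space \<gamma> \<and> sets \<gamma> = sets (p \<Otimes>\<^sub>M q)
                          \<and> distr \<gamma> p fst = p \<and> distr \<gamma> q snd = q}"

definition wasserstein :: "'a::{banach,second_countable_topology} measure \<Rightarrow> 'a measure \<Rightarrow> ennreal" where
  "wasserstein p q = (INF \<gamma> \<in> couplings p q. \<integral>\<^sup>+ z. ennreal (norm (fst z - snd z)) \<partial>\<gamma>)"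

definition Lip1 :: "('a::metric_space \<Rightarrow> real) set" where
  "Lip1 = {D. 1-lipschitz_on UNIV D}"

definition Dset :: "('a::{banach,second_countable_topology} \<times> 'b::{banach,second_countable_topology} \<Rightarrow> real) set" where
  "Dset = {D. D \<in> borel_measurable (borel \<Otimes>\<^sub>M borel) \<and> (\<forall>y. (\<lambda>x. D (x, y)) \<in> Lip1)}"

end

theory Submission
  imports Defs
begin


lemma lip_dist: "1-lipschitz_on UNIV f \<Longrightarrow> dist (f x) (f y) \<le> dist x y"
  using lipschitz_onD[of 1 UNIV f x y] by simp

lemma lip_meas:
  fixes f :: "'a::{banach,second_countable_topology} \<Rightarrow> real"
  assumes "1-lipschitz_on UNIV f" "sets N = sets borel"
  shows "f \<in> borel_measurable N"
  using borel_measurable_continuous_onI[OF lipschitz_on_continuous_on[OF assms(1)]]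
        measurable_cong_sets[OF assms(2) refl] by blast

lemma lip_integrable:
  fixes f :: "'a::{banach,second_countable_topology} \<Rightarrow> real"
  assumes L: "1-lipschitz_on UNIV f" and P: "prob_space N" and S: "sets N = sets borel"
    and I: "integrable N norm"
  shows "integrable N f"
proof (rule Bochner_Integration.integrable_bound[of N "\<lambda>x. \<bar>f 0\<bar> + norm x"])
  interpret prob_space N by fact
  show "integrable N (\<lambda>x. \<bar>f 0\<bar> + norm x)" using I by simp
  show "f \<in> borel_measurable N" by (rule lip_meas[OF L S])
  show "AE x in N. norm (f x) \<le> norm (\<bar>f 0\<bar> + norm x)"
  proof (intro AE_I2)
    fix x
    have "dist (f x) (f 0) \<le> dist x 0" by (rule lip_dist[OF L])
    then show "norm (f x) \<le> norm (\<bar>f 0\<bar> + norm x)" by (simp add: dist_real_def)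
  qed
qed

lemma distr_pair_snd':
  assumes "prob_space N" "prob_space M"
  shows "distr (N \<Otimes>\<^sub>M M) M snd = M"
proof -
  interpret pair_prob_space N M using assms by (simp add: pair_prob_space_def pair_sigma_finite_def prob_space_imp_sigma_finite)
  show ?thesis
  proof (intro measure_eqI)
    fix A assume A: "A \<in> sets (distr (N \<Otimes>\<^sub>M M) M snd)"
    from A have "emeasure (distr (N \<Otimes>\<^sub>M M) M snd) A = emeasure (N \<Otimes>\<^sub>M M) (space N \<times> A)"
      by (auto simp add: emeasure_distr space_pair_measure dest: sets.sets_into_space intro!: arg_cong2[where f=emeasure])
    with A show "emeasure (distr (N \<Otimes>\<^sub>M M) M snd) A = emeasure M A"
      using M2.emeasure_pair_measure_Times[of "space N" N A] by (simp add: M1.emeasure_space_1)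
  qed simp
qed

lemma pair_diff_integral:
  fixes f :: "'a::{banach,second_countable_topology} \<Rightarrow> real"
  assumes L: "1-lipschitz_on UNIV f" and P: "prob_space N" "prob_space M"
    and S: "sets N = sets borel" "sets M = sets borel"
    and I: "integrable N norm" "integrable M norm"
  shows "(\<integral>p. f (fst p) - f (snd p) \<partial>(N \<Otimes>\<^sub>M M)) = (\<integral>x. f x \<partial>N) - (\<integral>x. f x \<partial>M)"
proof -
  have fN: "integrable N f" by (rule lip_integrable[OF L P(1) S(1) I(1)])
  have fM: "integrable M f" by (rule lip_integrable[OF L P(2) S(2) I(2)])
  have mN: "f \<in> borel_measurable N" "f \<in> borel_measurable M" using lip_meas[OF L] S by auto
  have d1: "distr (N \<Otimes>\<^sub>M M) N fst = N" using prob_space.distr_pair_fst[OF P(2)] .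
  have d2: "distr (N \<Otimes>\<^sub>M M) M snd = M" using distr_pair_snd'[OF P] .
  have i1: "integrable (N \<Otimes>\<^sub>M M) (\<lambda>p. f (fst p))"
    using fN mN d1 integrable_distr_eq[of fst "N \<Otimes>\<^sub>M M" N f] by simp
  have i2: "integrable (N \<Otimes>\<^sub>M M) (\<lambda>p. f (snd p))"
    using fM mN d2 integrable_distr_eq[of snd "N \<Otimes>\<^sub>M M" M f] by simp
  have e1: "(\<integral>p. f (fst p) \<partial>(N \<Otimes>\<^sub>M M)) = (\<integral>x. f x \<partial>N)"
    using integral_distr[of fst "N \<Otimes>\<^sub>M M" N f] mN d1 by simp
  have e2: "(\<integral>p. f (snd p) \<partial>(N \<Otimes>\<^sub>M M)) = (\<integral>x. f x \<partial>M)"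
    using integral_distr[of snd "N \<Otimes>\<^sub>M M" M f] mN d2 by simp
  show ?thesis using i1 i2 e1 e2 by simp
qed



lemma integral_bind_nonneg:
  fixes g :: "'b \<Rightarrow> real"
  assumes N[measurable]: "N \<in> measurable M (subprob_algebra B)"
    and g[measurable]: "g \<in> borel_measurable B" and nn: "\<And>x. 0 \<le> g x"
    and int: "integrable (M \<bind> N) g"
  shows "AE x in M. integrable (N x) g"
    and "integrable M (\<lambda>x. \<integral>y. g y \<partial>N x)"
    and "(\<integral>x. g x \<partial>(M \<bind> N)) = (\<integral>x. \<integral>y. g y \<partial>N x \<partial>M)"
proof -
  have eqb: "(\<integral>\<^sup>+x. ennreal (g x) \<partial>(M \<bind> N)) = (\<integral>\<^sup>+x. \<integral>\<^sup>+y. ennreal (g y) \<partial>N x \<partial>M)"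
    by (rule nn_integral_bind[OF _ N]) simp
  have fin: "(\<integral>\<^sup>+x. ennreal (g x) \<partial>(M \<bind> N)) < \<infinity>"
    using int nn by (simp add: integrable_iff_bounded)
  have m1: "(\<lambda>x. \<integral>\<^sup>+y. ennreal (g y) \<partial>N x) \<in> borel_measurable M"
    by (rule measurable_compose[OF N nn_integral_measurable_subprob_algebra]) simp
  have AEfin: "AE x in M. (\<integral>\<^sup>+y. ennreal (g y) \<partial>N x) \<noteq> \<infinity>"
    by (rule nn_integral_PInf_AE[OF m1]) (use fin eqb in simp)
  have sk: "\<And>x. x \<in> space M \<Longrightarrow> sets (N x) = sets B"
    using sets_kernel[OF N] by simp
  show AEi: "AE x in M. integrable (N x) g"
    using AEfin
  proof (rule AE_mp, intro AE_I2 impI)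
    fix x assume x: "x \<in> space M" and f: "(\<integral>\<^sup>+y. ennreal (g y) \<partial>N x) \<noteq> \<infinity>"
    have "g \<in> borel_measurable (N x)" using measurable_cong_sets[OF sk[OF x] refl] g by blast
    then show "integrable (N x) g" using f nn by (simp add: integrable_iff_bounded top.not_eq_extremum)
  qed
  have AEeq: "AE x in M. (\<integral>\<^sup>+y. ennreal (g y) \<partial>N x) = ennreal (\<integral>y. g y \<partial>N x)"
    using AEi by (rule AE_mp) (intro AE_I2 impI nn_integral_eq_integral, auto simp: nn)
  have m2: "(\<lambda>x. \<integral>y. g y \<partial>N x) \<in> borel_measurable M"
    by (rule measurable_compose[OF N integral_measurable_subprob_algebra]) simp
  have nn2: "\<And>x. 0 \<le> (\<integral>y. g y \<partial>N x)" by (simp add: nn)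
  have eq2: "(\<integral>\<^sup>+x. ennreal (\<integral>y. g y \<partial>N x) \<partial>M) = (\<integral>\<^sup>+x. ennreal (g x) \<partial>(M \<bind> N))"
    using eqb AEeq by (simp add: nn_integral_cong_AE)
  show "integrable M (\<lambda>x. \<integral>y. g y \<partial>N x)"
    using m2 nn2 eq2 fin by (simp add: integrable_iff_bounded)
  have "(\<integral>x. \<integral>y. g y \<partial>N x \<partial>M) = enn2real (\<integral>\<^sup>+x. ennreal (\<integral>y. g y \<partial>N x) \<partial>M)"
    by (rule integral_eq_nn_integral[OF m2]) (simp add: nn2)
  also have "\<dots> = enn2real (\<integral>\<^sup>+x. ennreal (g x) \<partial>(M \<bind> N))" using eq2 by simp
  also have "\<dots> = (\<integral>x. g x \<partial>(M \<bind> N))"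
    by (rule integral_eq_nn_integral[symmetric]) (auto simp: nn borel_measurable_integrable[OF int])
  finally show "(\<integral>x. g x \<partial>(M \<bind> N)) = (\<integral>x. \<integral>y. g y \<partial>N x \<partial>M)" by simp
qed

lemma integral_bind_real:
  fixes f :: "'b \<Rightarrow> real"
  assumes N[measurable]: "N \<in> measurable M (subprob_algebra B)"
    and f[measurable]: "f \<in> borel_measurable B"
    and int: "integrable (M \<bind> N) f"
  shows "integrable M (\<lambda>x. \<integral>y. f y \<partial>N x)"
    and "(\<integral>x. f x \<partial>(M \<bind> N)) = (\<integral>x. \<integral>y. f y \<partial>N x \<partial>M)"
proof -
  define g1 where "g1 = (\<lambda>y. max (f y) 0)"
  define g2 where "g2 = (\<lambda>y. max (- f y) 0)"
  have fg: "f = (\<lambda>y. g1 y - g2 y)" by (auto simp: g1_def g2_def fun_eq_iff)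
  have [measurable]: "g1 \<in> borel_measurable B" "g2 \<in> borel_measurable B" unfolding g1_def g2_def by simp_all
  have i1: "integrable (M \<bind> N) g1" unfolding g1_def by (intro integrable_max int) simp
  have i2: "integrable (M \<bind> N) g2" unfolding g2_def by (intro integrable_max integrable_minus int) simp
  note r1 = integral_bind_nonneg[OF N \<open>g1 \<in> _\<close> _ i1] and r2 = integral_bind_nonneg[OF N \<open>g2 \<in> _\<close> _ i2]
  have nn: "\<And>y. 0 \<le> g1 y" "\<And>y. 0 \<le> g2 y" unfolding g1_def g2_def by auto
  have AE: "AE x in M. (\<integral>y. f y \<partial>N x) = (\<integral>y. g1 y \<partial>N x) - (\<integral>y. g2 y \<partial>N x)"
    using r1(1)[OF nn(1)] r2(1)[OF nn(2)] by eventually_elim (simp add: fg)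
  have m: "(\<lambda>x. \<integral>y. f y \<partial>N x) \<in> borel_measurable M"
    by (rule measurable_compose[OF N integral_measurable_subprob_algebra]) simp
  have id: "integrable M (\<lambda>x. (\<integral>y. g1 y \<partial>N x) - (\<integral>y. g2 y \<partial>N x))"
    using r1(2)[OF nn(1)] r2(2)[OF nn(2)] by simp
  show "integrable M (\<lambda>x. \<integral>y. f y \<partial>N x)"
    using integrable_cong_AE_imp[OF id m] AE by (simp add: eq_commute)
  have "(\<integral>x. \<integral>y. f y \<partial>N x \<partial>M) = (\<integral>x. (\<integral>y. g1 y \<partial>N x) - (\<integral>y. g2 y \<partial>N x) \<partial>M)"
    by (rule integral_cong_AE[OF m _ AE]) (use id in auto)
  also have "\<dots> = (\<integral>x. g1 x \<partial>(M \<bind> N)) - (\<integral>x. g2 x \<partial>(M \<bind> N))"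
    using r1(2,3)[OF nn(1)] r2(2,3)[OF nn(2)] by simp
  also have "\<dots> = (\<integral>x. f x \<partial>(M \<bind> N))" using i1 i2 by (simp add: fg)
  finally show "(\<integral>x. f x \<partial>(M \<bind> N)) = (\<integral>x. \<integral>y. f y \<partial>N x \<partial>M)" by simp
qed



definition gl :: "(nat \<Rightarrow> 'a::metric_space) \<Rightarrow> (nat \<times> rat) list \<Rightarrow> 'a \<Rightarrow> real" where
  "gl d l x = (if l = [] then 0 else Min ((\<lambda>(n,r). real_of_rat r + dist x (d n)) ` set l))"

lemma gl_le: "(n,r) \<in> set l \<Longrightarrow> gl d l x \<le> real_of_rat r + dist x (d n)"
  unfolding gl_def by (auto intro!: Min_le)

lemma gl_ge: "l \<noteq> [] \<Longrightarrow> (\<And>n r. (n,r) \<in> set l \<Longrightarrow> c \<le> real_of_rat r + dist x (d n)) \<Longrightarrow> c \<le> gl d l x"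
  unfolding gl_def by (auto simp: Min_ge_iff)

lemma gl_half: "gl d l x \<le> gl d l y + dist x y"
proof (cases "l = []")
  case True then show ?thesis by (simp add: gl_def)
next
  case False
  have "gl d l y \<in> (\<lambda>(n,r). real_of_rat r + dist y (d n)) ` set l"
    unfolding gl_def using False by (auto intro!: Min_in)
  then obtain n r where nr: "(n,r) \<in> set l" "gl d l y = real_of_rat r + dist y (d n)" by auto
  have "gl d l x \<le> real_of_rat r + dist x (d n)" by (rule gl_le[OF nr(1)])
  also have "\<dots> \<le> real_of_rat r + dist y (d n) + dist x y" using dist_triangle[of x "d n" y] by simp
  finally show ?thesis using nr(2) by simp
qed

lemma gl_lip: "1-lipschitz_on UNIV (gl d l)"
proof (rule lipschitz_onI)
  fix x y :: 'a
  show "dist (gl d l x) (gl d l y) \<le> 1 * dist x y"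
    using gl_half[of d l x y] gl_half[of d l y x] by (simp add: dist_real_def dist_commute abs_le_iff)
qed simp

lemma approx_lip:
  fixes f :: "'a::metric_space \<Rightarrow> real"
  assumes dense: "\<And>x e. 0 < e \<Longrightarrow> \<exists>n. dist x (d n) < e" and L: "1-lipschitz_on UNIV f"
  shows "\<exists>ls. (\<forall>x. (\<lambda>N. gl d (ls N) x) \<longlonglongrightarrow> f x) \<and>
     (\<forall>N x. f x \<le> gl d (ls N) x \<and> gl d (ls N) x \<le> f (d 0) + 1 + dist x (d 0))"
proof -
  have exq: "\<exists>q. f (d n) < real_of_rat q \<and> real_of_rat q < f (d n) + 1 / real (Suc N)" for n N
  proof -
    have "f (d n) < f (d n) + 1 / real (Suc N)" by simp
    from Rats_dense_in_real[OF this] obtain r where "r \<in> \<rat>" "f (d n) < r" "r < f (d n) + 1 / real (Suc N)" by blast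
    then show ?thesis by (metis Rats_cases)
  qed
  define q where "q N n = (SOME q. f (d n) < real_of_rat q \<and> real_of_rat q < f (d n) + 1 / real (Suc N))" for N n
  have q: "f (d n) < real_of_rat (q N n)" "real_of_rat (q N n) < f (d n) + 1 / real (Suc N)" for N n
    using someI_ex[OF exq[of n N]] unfolding q_def by auto
  define ls where "ls N = map (\<lambda>n. (n, q N n)) [0..<Suc N]" for N
  have mem: "(n, q N n) \<in> set (ls N)" if "n \<le> N" for n N
    unfolding ls_def set_map by (rule imageI) (use that in auto)
  have fl: "f x \<le> f (d n) + dist x (d n)" for x n
    using lip_dist[OF L, of x "d n"] by (simp add: dist_real_def)
  have low: "f x \<le> gl d (ls N) x" for N x
  proof (rule gl_ge)
    show "ls N \<noteq> []" by (simp add: ls_def)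
    fix n r assume "(n, r) \<in> set (ls N)"
    then have "r = q N n" by (auto simp: ls_def)
    then show "f x \<le> real_of_rat r + dist x (d n)" using fl[of x n] q(1)[where n=n and N=N] by simp
  qed
  have up: "gl d (ls N) x \<le> real_of_rat (q N n) + dist x (d n)" if "n \<le> N" for N n x
    by (rule gl_le[OF mem[OF that]])
  have up0: "gl d (ls N) x \<le> f (d 0) + 1 + dist x (d 0)" for N x
  proof -
    have "1 / real (Suc N) \<le> 1" by simp
    then show ?thesis using up[of 0 N x] q(2)[where n=0 and N=N] by linarith
  qed
  have lim: "(\<lambda>N. gl d (ls N) x) \<longlonglongrightarrow> f x" for x
  proof (rule LIMSEQ_I)
    fix e :: real assume e: "0 < e"
    obtain n0 where n0: "dist x (d n0) < e / 3" using dense[of "e/3" x] e by auto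
    obtain N1 where N1: "1 / real (Suc N1) < e / 3"
      using reals_Archimedean[of "e/3"] e by (auto simp: inverse_eq_divide)
    show "\<exists>no. \<forall>N\<ge>no. norm (gl d (ls N) x - f x) < e"
    proof (intro exI allI impI)
      fix N assume N: "max n0 N1 \<le> N"
      have "1 / real (Suc N) \<le> 1 / real (Suc N1)" using N by (simp add: frac_le)
      moreover have "gl d (ls N) x \<le> real_of_rat (q N n0) + dist x (d n0)" using up[of n0 N x] N by simp
      moreover have "f (d n0) \<le> f x + dist x (d n0)"
        using lip_dist[OF L, of "d n0" x] by (simp add: dist_real_def dist_commute)
      ultimately have "gl d (ls N) x < f x + e" using q(2)[where n=n0 and N=N] n0 N1 by linarith
      then show "norm (gl d (ls N) x - f x) < e" using low[of x N] by simp
    qed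
  qed
  show ?thesis using lim low up0 by blast
qed

definition glc :: "(nat \<Rightarrow> 'a::metric_space) \<Rightarrow> (nat \<times> rat) list \<times> nat \<Rightarrow> 'a \<Rightarrow> real" where
  "glc d p x = max (- real (snd p)) (min (real (snd p)) (gl d (fst p) x))"

lemma glc_lip: "1-lipschitz_on UNIV (glc d p)"
proof (rule lipschitz_onI)
  fix x y :: 'a
  have "dist (gl d (fst p) x) (gl d (fst p) y) \<le> 1 * dist x y"
    using gl_lip[of d "fst p"] by (simp add: lipschitz_on_def)
  then show "dist (glc d p x) (glc d p y) \<le> 1 * dist x y"
    unfolding glc_def dist_real_def by (simp add: abs_le_iff) linarith
qed simp

lemma glc_bound: "\<bar>glc d p x\<bar> \<le> real (snd p)"
  unfolding glc_def by auto

lemma glc_abs: "\<bar>glc d p x\<bar> \<le> \<bar>gl d (fst p) x\<bar>"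
  unfolding glc_def by auto

lemma approx_lipc:
  fixes f :: "'a::metric_space \<Rightarrow> real"
  assumes dense: "\<And>x e. 0 < e \<Longrightarrow> \<exists>n. dist x (d n) < e" and L: "1-lipschitz_on UNIV f"
  shows "\<exists>ls. (\<forall>x. (\<lambda>N. glc d (ls N) x) \<longlonglongrightarrow> f x) \<and>
     (\<forall>N x. \<bar>glc d (ls N) x\<bar> \<le> \<bar>f x\<bar> + \<bar>f (d 0)\<bar> + 1 + dist x (d 0))"
proof -
  obtain ls where lim: "\<And>x. (\<lambda>i. gl d (ls i) x) \<longlonglongrightarrow> f x"
     and bd: "\<And>i x. f x \<le> gl d (ls i) x \<and> gl d (ls i) x \<le> f (d 0) + 1 + dist x (d 0)"
    using approx_lip[OF dense L] by blast
  have l2: "(\<lambda>N. glc d (ls N, N) x) \<longlonglongrightarrow> f x" for x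
  proof -
    obtain N0 :: nat where N0: "\<bar>f x\<bar> + 1 \<le> real N0" using real_arch_simple by blast
    have "eventually (\<lambda>N. dist (gl d (ls N) x) (f x) < 1) sequentially"
      using lim[of x] by (simp add: tendsto_iff)
    moreover have "eventually (\<lambda>N. N0 \<le> N) sequentially" by (rule eventually_ge_at_top)
    ultimately have "eventually (\<lambda>N. gl d (ls N) x = glc d (ls N, N) x) sequentially"
    proof eventually_elim
      case (elim N)
      then have "\<bar>gl d (ls N) x\<bar> \<le> real N" using N0 by (simp add: dist_real_def)
      then show ?case by (simp add: glc_def)
    qed
    then show ?thesis using lim[of x] by (rule Lim_transform_eventually[rotated])
  qed
  have "\<bar>glc d (ls N, N) x\<bar> \<le> \<bar>f x\<bar> + \<bar>f (d 0)\<bar> + 1 + dist x (d 0)" for N x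
    using glc_abs[of d "(ls N, N)" x] bd[of x N] zero_le_dist[of x "d 0"] by (simp only: fst_conv) linarith
  with l2 show ?thesis by (intro exI[of _ "\<lambda>N. (ls N, N)"]) auto
qed

definition fam :: "(nat \<Rightarrow> 'a::metric_space) \<Rightarrow> nat \<Rightarrow> 'a \<Rightarrow> real" where
  "fam d k = (if k = 0 then (\<lambda>_. 0) else glc d (from_nat (k - 1)))"

definition fb :: "nat \<Rightarrow> real" where
  "fb k = (if k = 0 then 0 else real (snd (from_nat (k - 1) :: (nat \<times> rat) list \<times> nat)))"

lemma fam_0: "fam d 0 = (\<lambda>_. 0)" by (simp add: fam_def)

lemma fam_glc: "glc d p = fam d (Suc (to_nat p))" by (simp add: fam_def)

lemma fam_lip: "1-lipschitz_on UNIV (fam d k)"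
  by (auto simp: fam_def glc_lip intro: lipschitz_onI)

lemma fam_bound: "\<bar>fam d k x\<bar> \<le> fb k"
  by (auto simp: fam_def fb_def glc_bound)

lemma fam_sup:
  fixes f :: "'a::{banach,second_countable_topology} \<Rightarrow> real"
  assumes dense: "\<And>x e. 0 < e \<Longrightarrow> \<exists>n. dist x (d n) < e" and L: "1-lipschitz_on UNIV f"
    and P: "prob_space N" "prob_space M" and S: "sets N = sets borel" "sets M = sets borel"
    and I: "integrable N norm" "integrable M norm"
  shows "ereal ((\<integral>x. f x \<partial>N) - (\<integral>x. f x \<partial>M)) \<le> (SUP k. ereal ((\<integral>x. fam d k x \<partial>N) - (\<integral>x. fam d k x \<partial>M)))"
proof -
  obtain ls where lim: "\<And>x. (\<lambda>i. glc d (ls i) x) \<longlonglongrightarrow> f x"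
     and bd: "\<And>i x. \<bar>glc d (ls i) x\<bar> \<le> \<bar>f x\<bar> + \<bar>f (d 0)\<bar> + 1 + dist x (d 0)"
    using approx_lipc[OF dense L] by blast
  have dl: "1-lipschitz_on UNIV (\<lambda>x. dist x (d 0))"
  proof (rule lipschitz_onI)
    fix x y
    show "dist (dist x (d 0)) (dist y (d 0)) \<le> 1 * dist x y"
      using dist_triangle[of x "d 0" y] dist_triangle[of y "d 0" x] by (auto simp: dist_real_def dist_commute abs_le_iff)
  qed simp
  have conv: "(\<lambda>i. \<integral>x. glc d (ls i) x \<partial>Q) \<longlonglongrightarrow> (\<integral>x. f x \<partial>Q)"
    if PQ: "prob_space Q" and SQ: "sets Q = sets borel" and IQ: "integrable Q norm" for Q
  proof (rule integral_dominated_convergence[where w="\<lambda>x. \<bar>f x\<bar> + \<bar>f (d 0)\<bar> + 1 + dist x (d 0)"])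
    interpret prob_space Q by fact
    show "f \<in> borel_measurable Q" by (rule lip_meas[OF L SQ])
    show "glc d (ls i) \<in> borel_measurable Q" for i by (rule lip_meas[OF glc_lip SQ])
    show "integrable Q (\<lambda>x. \<bar>f x\<bar> + \<bar>f (d 0)\<bar> + 1 + dist x (d 0))"
      using lip_integrable[OF L PQ SQ IQ] lip_integrable[OF dl PQ SQ IQ] by simp
    show "AE x in Q. (\<lambda>i. glc d (ls i) x) \<longlonglongrightarrow> f x" using lim by simp
    show "AE x in Q. norm (glc d (ls i) x) \<le> \<bar>f x\<bar> + \<bar>f (d 0)\<bar> + 1 + dist x (d 0)" for i
      using bd by simp
  qed
  have t: "(\<lambda>i. ereal ((\<integral>x. glc d (ls i) x \<partial>N) - (\<integral>x. glc d (ls i) x \<partial>M))) \<longlonglongrightarrow> ereal ((\<integral>x. f x \<partial>N) - (\<integral>x. f x \<partial>M))"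
    by (intro tendsto_ereal tendsto_diff conv P S I)
  have u: "ereal ((\<integral>x. glc d (ls i) x \<partial>N) - (\<integral>x. glc d (ls i) x \<partial>M)) \<le> (SUP k. ereal ((\<integral>x. fam d k x \<partial>N) - (\<integral>x. fam d k x \<partial>M)))" for i
    unfolding fam_glc by (rule SUP_upper) simp
  show ?thesis by (rule Lim_bounded[OF t, where M=0]) (use u in auto)
qed



lemma coupling_moment:
  fixes p q :: "'a::{banach,second_countable_topology} measure"
  assumes P: "p \<in> wasserstein_space" and W: "wasserstein p q < \<top>" and Sq: "sets q = sets borel"
  shows "integrable q norm"
proof -
  obtain \<gamma> where g: "\<gamma> \<in> couplings p q" and gf: "(\<integral>\<^sup>+z. ennreal (norm (fst z - snd z)) \<partial>\<gamma>) < \<top>"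
    using W by (auto simp: wasserstein_def INF_less_iff)
  have Sp: "sets p = sets borel" and pf: "(\<integral>\<^sup>+ x. ennreal (norm x) \<partial>p) < \<infinity>"
    using P by (auto simp: wasserstein_space_def)
  have gs: "sets \<gamma> = sets (p \<Otimes>\<^sub>M q)" and d1: "distr \<gamma> p fst = p" and d2: "distr \<gamma> q snd = q"
    using g by (auto simp: couplings_def)
  have ms: "snd \<in> measurable \<gamma> q" "fst \<in> measurable \<gamma> p"
    unfolding measurable_cong_sets[OF gs refl] by auto
  have gs': "sets \<gamma> = sets (borel \<Otimes>\<^sub>M borel)" using gs sets_pair_measure_cong[OF Sp Sq] by simp
  have [measurable]: "(\<lambda>z. norm (fst z - snd z)) \<in> borel_measurable \<gamma>" "(\<lambda>z. norm (fst z)) \<in> borel_measurable \<gamma>"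
     "(\<lambda>z. norm (snd z)) \<in> borel_measurable \<gamma>"
    unfolding measurable_cong_sets[OF gs' refl] by measurable
  have nq: "norm \<in> borel_measurable q" "norm \<in> borel_measurable p"
    unfolding measurable_cong_sets[OF Sq refl] measurable_cong_sets[OF Sp refl] by auto
  have "(\<integral>\<^sup>+ x. ennreal (norm x) \<partial>q) = (\<integral>\<^sup>+ z. ennreal (norm (snd z)) \<partial>\<gamma>)"
    using nn_integral_distr[OF ms(1), of "\<lambda>x. ennreal (norm x)"] nq d2 by simp
  also have "\<dots> \<le> (\<integral>\<^sup>+ z. ennreal (norm (fst z)) + ennreal (norm (fst z - snd z)) \<partial>\<gamma>)"
  proof (rule nn_integral_mono)
    fix z :: "'a \<times> 'a"
    have "norm (snd z) \<le> norm (fst z) + norm (fst z - snd z)" by (metis norm_triangle_sub norm_minus_commute)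
    then show "ennreal (norm (snd z)) \<le> ennreal (norm (fst z)) + ennreal (norm (fst z - snd z))"
      by (simp add: ennreal_plus[symmetric] del: ennreal_plus)
  qed
  also have "\<dots> = (\<integral>\<^sup>+ z. ennreal (norm (fst z)) \<partial>\<gamma>) + (\<integral>\<^sup>+ z. ennreal (norm (fst z - snd z)) \<partial>\<gamma>)"
    by (rule nn_integral_add) simp_all
  also have "(\<integral>\<^sup>+ z. ennreal (norm (fst z)) \<partial>\<gamma>) = (\<integral>\<^sup>+ x. ennreal (norm x) \<partial>p)"
    using nn_integral_distr[OF ms(2), of "\<lambda>x. ennreal (norm x)"] nq d1 by simp
  finally have "(\<integral>\<^sup>+ x. ennreal (norm x) \<partial>q) < \<infinity>" using pf gf by (simp add: order_le_less_trans)
  then show ?thesis using nq by (simp add: integrable_iff_bounded)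
qed

primrec hmax :: "(nat \<Rightarrow> real) \<Rightarrow> nat \<Rightarrow> real" where
  "hmax a 0 = a 0"
| "hmax a (Suc n) = max (hmax a n) (a (Suc n))"

lemma hmax_ge: "k \<le> n \<Longrightarrow> a k \<le> hmax a n"
  by (induction n) (auto simp: le_Suc_eq)

lemma hmax_ex: "\<exists>k\<le>n. hmax a n = a k"
  by (induction n) (auto simp: max_def le_Suc_eq)

lemma hmax_mono: "hmax a n \<le> hmax a (Suc n)" by simp

lemma hmax_meas[measurable]:
  "(\<And>k. (\<lambda>y. a k y) \<in> borel_measurable M) \<Longrightarrow> (\<lambda>y. hmax (\<lambda>k. a k y) n) \<in> borel_measurable M"
  by (induction n) auto



lemma prob_abs_int_bound:
  fixes f :: "'a \<Rightarrow> real"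
  assumes P: "prob_space N" and B: "\<And>x. \<bar>f x\<bar> \<le> B" and m: "f \<in> borel_measurable N"
  shows "\<bar>\<integral>x. f x \<partial>N\<bar> \<le> B"
proof -
  interpret prob_space N by fact
  have i: "integrable N f" by (rule integrable_const_bound[where B=B]) (use B m in auto)
  show ?thesis
  proof -
    have "(\<integral>x. f x \<partial>N) \<le> B" by (rule integral_le_const[OF i]) (use B in \<open>auto simp: abs_le_iff\<close>)
    moreover have "-B \<le> (\<integral>x. f x \<partial>N)"
    proof (rule integral_ge_const[OF i], rule AE_I2)
      fix x show "-B \<le> f x" using B[of x] by linarith
    qed
    ultimately show ?thesis by simp
  qed
qed

lemma fb_nn: "0 \<le> fb k" by (simp add: fb_def)

theorem mainTheorem1:
  fixes \<mu> :: "('x::{banach,second_countable_topology} \<times> 'y::{banach,second_countable_topology}) measure"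
    and \<sigma> :: "'y measure"
    and \<pi> :: "'y \<Rightarrow> 'x measure"
    and G :: "'y \<Rightarrow> 'x measure"
  assumes mu_prob: "prob_space \<mu>"
    and mu_sets: "sets \<mu> = sets (borel \<Otimes>\<^sub>M borel)"
    and sigma_def: "\<sigma> = distr \<mu> borel snd"
    and pi_kernel: "\<pi> \<in> measurable \<sigma> (prob_algebra borel)"
    and disint: "\<mu> = \<sigma> \<bind> (\<lambda>y. distr (\<pi> y) (borel \<Otimes>\<^sub>M borel) (\<lambda>x. (x, y)))"
    and G_kernel: "G \<in> measurable \<sigma> (prob_algebra borel)"
    and G_W: "\<And>y. G y \<in> wasserstein_space"
    and W_finite: "\<And>y. wasserstein (G y) (\<pi> y) < \<top>"
    and W_meas: "(\<lambda>y. enn2real (wasserstein (G y) (\<pi> y))) \<in> borel_measurable \<sigma>"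
  shows "enn2ereal (\<integral>\<^sup>+ y. e2ennreal (SUP D \<in> Lip1.
             ereal (\<integral> p. D (fst p) - D (snd p) \<partial>(\<pi> y \<Otimes>\<^sub>M G y))) \<partial>\<sigma>)
       = (SUP D \<in> Dset.
             ereal (\<integral> w. D (fst w) - D (snd w, snd (fst w))
                  \<partial>(\<mu> \<bind> (\<lambda>z. distr (G (snd z)) (\<mu> \<Otimes>\<^sub>M borel) (\<lambda>v. (z, v))))))"
proof -
  have sets_sigma[measurable_cong]: "sets \<sigma> = sets borel" using sigma_def by simp
  have space_sigma: "space \<sigma> = UNIV" using sets_eq_imp_space_eq[OF sets_sigma] by simp
  note sets_mu[measurable_cong] = mu_sets
  have sigma_prob: "prob_space \<sigma>" unfolding sigma_def by (rule prob_space.prob_space_distr[OF mu_prob]) (simp add: measurable_cong_sets[OF mu_sets refl])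
  note pik[measurable] = measurable_prob_algebraD[OF pi_kernel]
  note Gk[measurable] = measurable_prob_algebraD[OF G_kernel]
  have piP: "prob_space (\<pi> y)" "sets (\<pi> y) = sets borel" for y
    using measurable_space[OF pi_kernel, of y] space_sigma by (auto simp: space_prob_algebra)
  have GP: "prob_space (G y)" "sets (G y) = sets borel" for y
    using measurable_space[OF G_kernel, of y] space_sigma by (auto simp: space_prob_algebra)
  have Gint: "integrable (G y) norm" for y
    using G_W[of y] unfolding integrable_iff_bounded measurable_cong_sets[OF GP(2) refl]
    by (simp add: wasserstein_space_def)
  have piint: "integrable (\<pi> y) norm" for y
    by (rule coupling_moment[OF G_W W_finite piP(2)])
  obtain d :: "nat \<Rightarrow> 'x" where dense: "\<And>x e. 0 < e \<Longrightarrow> \<exists>n. dist x (d n) < e"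
  proof -
    obtain Dd :: "'x set" where Dd: "countable Dd" "\<And>X. open X \<Longrightarrow> X \<noteq> {} \<Longrightarrow> \<exists>d\<in>Dd. d \<in> X"
      using countable_dense_exists by blast
    have ne: "Dd \<noteq> {}" using Dd(2)[of UNIV] by auto
    show ?thesis
    proof
      fix x :: 'x and e :: real assume e: "0 < e"
      obtain p where "p \<in> Dd" "p \<in> ball x e" using Dd(2)[of "ball x e"] e by auto
      then show "\<exists>n. dist x (from_nat_into Dd n) < e"
        by (metis from_nat_into_surj[OF Dd(1)] mem_ball)
    qed
  qed
  define E where "E y f = (\<integral>x. f x \<partial>\<pi> y) - (\<integral>x. f x \<partial>G y)" for y and f :: "'x \<Rightarrow> real"
  have pairE: "(\<integral>p. f (fst p) - f (snd p) \<partial>(\<pi> y \<Otimes>\<^sub>M G y)) = E y f" if "f \<in> Lip1" for f y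
    unfolding E_def using that
    by (intro pair_diff_integral piP GP piint Gint) (simp add: Lip1_def)
  have famL: "fam d k \<in> Lip1" for k using fam_lip by (simp add: Lip1_def)
  define S where "S y = (SUP k. ereal (E y (fam d k)))" for y
  have lhsS: "(SUP D\<in>Lip1. ereal (\<integral>p. D (fst p) - D (snd p) \<partial>(\<pi> y \<Otimes>\<^sub>M G y))) = S y" for y
  proof -
    have "(SUP D\<in>Lip1. ereal (\<integral>p. D (fst p) - D (snd p) \<partial>(\<pi> y \<Otimes>\<^sub>M G y))) = (SUP D\<in>Lip1. ereal (E y D))"
      by (rule SUP_cong) (simp_all add: pairE)
    also have "\<dots> = S y"
    proof (rule antisym)
      show "(SUP D\<in>Lip1. ereal (E y D)) \<le> S y"
        unfolding S_def E_def
        by (rule SUP_least, rule fam_sup[OF dense _ piP(1) GP(1) piP(2) GP(2) piint Gint]) (auto simp: Lip1_def)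
      show "S y \<le> (SUP D\<in>Lip1. ereal (E y D))"
        unfolding S_def by (rule SUP_least, rule SUP_upper[OF famL])
    qed
    finally show ?thesis .
  qed
  have famM[measurable]: "fam d k \<in> borel_measurable borel" for k by (rule lip_meas[OF fam_lip]) simp
  have Emeas[measurable]: "(\<lambda>y. E y g) \<in> borel_measurable \<sigma>" if [measurable]: "g \<in> borel_measurable borel" for g
    unfolding E_def by measurable
  define a where "a k y = E y (fam d k)" for k y
  have am[measurable]: "(\<lambda>y. a k y) \<in> borel_measurable \<sigma>" for k unfolding a_def by measurable
  define h where "h n y = hmax (\<lambda>k. a k y) n" for n y
  have hm[measurable]: "(\<lambda>y. h n y) \<in> borel_measurable \<sigma>" for n unfolding h_def by measurable
  have a0: "a 0 y = 0" for y by (simp add: a_def E_def fam_0)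
  have h_nn: "0 \<le> h n y" for n y using hmax_ge[of 0 n "\<lambda>k. a k y"] a0 by (simp add: h_def)
  have abound: "\<bar>a k y\<bar> \<le> 2 * fb k" for k y
  proof -
    have "\<bar>\<integral>x. fam d k x \<partial>\<pi> y\<bar> \<le> fb k"
      by (rule prob_abs_int_bound[OF _ fam_bound], simp_all add: piP measurable_cong_sets[OF piP(2) refl])
    moreover have "\<bar>\<integral>x. fam d k x \<partial>G y\<bar> \<le> fb k"
      by (rule prob_abs_int_bound[OF _ fam_bound], simp_all add: GP measurable_cong_sets[OF GP(2) refl])
    ultimately show ?thesis by (simp add: a_def E_def)
  qed
  define bnd where "bnd n = (\<Sum>k\<le>n. 2 * fb k)" for n
  have hbound: "\<bar>h n y\<bar> \<le> bnd n" for n y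
  proof -
    obtain k where k: "k \<le> n" "h n y = a k y" using hmax_ex[of n "\<lambda>k. a k y"] by (auto simp: h_def)
    have "2 * fb k \<le> bnd n" unfolding bnd_def by (rule member_le_sum) (use k fb_nn in auto)
    then show ?thesis using k abound[of k y] by simp
  qed
  have hinc: "h n y \<le> h (Suc n) y" for n y by (simp add: h_def)
  have hge: "a k y \<le> h n y" if "k \<le> n" for k n y using hmax_ge[OF that] by (simp add: h_def)
  define kn where "kn n y = (LEAST k. k \<le> n \<and> a k y = h n y)" for n y
  have kn: "kn n y \<le> n \<and> a (kn n y) y = h n y" for n y
  proof -
    have "\<exists>k. k \<le> n \<and> a k y = h n y" using hmax_ex[of n "\<lambda>k. a k y"] by (auto simp: h_def)
    then show ?thesis unfolding kn_def by (rule LeastI_ex)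
  qed
  have knm[measurable]: "kn n \<in> measurable \<sigma> (count_space UNIV)" for n
    unfolding kn_def by measurable
  define Dn where "Dn n = (\<lambda>w. fam d (kn n (snd w)) (fst w))" for n
  have Dnm: "Dn n \<in> borel_measurable (borel \<Otimes>\<^sub>M borel)" for n
  proof -
    have "(\<lambda>w. kn n (snd w)) \<in> measurable (borel \<Otimes>\<^sub>M borel) (count_space UNIV)"
      by measurable
    moreover have "(\<lambda>w. fam d i (fst w)) \<in> borel_measurable (borel \<Otimes>\<^sub>M borel)" for i by measurable
    ultimately show ?thesis unfolding Dn_def
      using measurable_compose_countable'[where f="\<lambda>i w. fam d i (fst w)" and g="\<lambda>w. kn n (snd w)"
         and I=UNIV and M="borel \<Otimes>\<^sub>M borel" and N=borel] by simp
  qed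
  have DnD: "Dn n \<in> Dset" for n
    using Dnm by (simp add: Dset_def Lip1_def Dn_def fam_lip)
  have Dnb: "\<bar>Dn n w\<bar> \<le> bnd n" for n w
  proof -
    have "\<bar>Dn n w\<bar> \<le> fb (kn n (snd w))" unfolding Dn_def by (rule fam_bound)
    also have "\<dots> \<le> 2 * fb (kn n (snd w))" using fb_nn by simp
    also have "\<dots> \<le> bnd n" unfolding bnd_def by (rule member_le_sum) (use kn fb_nn in auto)
    finally show ?thesis .
  qed
  have DnE: "E y (\<lambda>x. Dn n (x, y)) = h n y" for n y
    using kn[of n y] by (simp add: Dn_def a_def)
  have space_mu: "space \<mu> = UNIV" using sets_eq_imp_space_eq[OF mu_sets] by (simp add: space_pair_measure)
  have snd_m: "snd \<in> measurable \<mu> \<sigma>"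
    unfolding measurable_cong_sets[OF mu_sets sets_sigma] by simp
  have Gsnd: "(\<lambda>z. G (snd z)) \<in> \<mu> \<rightarrow>\<^sub>M prob_algebra borel"
    by (rule measurable_compose[OF snd_m G_kernel])
  define K where "K = (\<lambda>z. distr (G (snd z)) (\<mu> \<Otimes>\<^sub>M borel) (\<lambda>v. (z, v)))"
  define L where "L = (\<lambda>y. distr (\<pi> y) (borel \<Otimes>\<^sub>M borel) (\<lambda>x. (x, y)))"
  have Kp: "K \<in> \<mu> \<rightarrow>\<^sub>M prob_algebra (\<mu> \<Otimes>\<^sub>M borel)"
    unfolding K_def by (rule measurable_distr_prob_space2[OF Gsnd]) simp
  note Kk = measurable_prob_algebraD[OF Kp]
  have Lp: "L \<in> \<sigma> \<rightarrow>\<^sub>M prob_algebra (borel \<Otimes>\<^sub>M borel)"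
    unfolding L_def by (rule measurable_distr_prob_space2[OF pi_kernel]) measurable
  note Lk = measurable_prob_algebraD[OF Lp]
  have Mprob: "prob_space (\<mu> \<bind> K)"
    by (rule prob_space_bind'[OF _ Kp]) (simp add: space_prob_algebra mu_prob)
  have muB: "sets (\<mu> \<Otimes>\<^sub>M borel) = sets ((borel \<Otimes>\<^sub>M borel) \<Otimes>\<^sub>M borel)"
    by (rule sets_pair_measure_cong[OF mu_sets refl])
  define \<phi> where "\<phi> D w = D (fst w) - D (snd w, snd (fst w))" for D :: "'x \<times> 'y \<Rightarrow> real" and w
  have \<phi>m: "\<phi> D \<in> borel_measurable (\<mu> \<Otimes>\<^sub>M borel)" if [measurable]: "D \<in> borel_measurable (borel \<Otimes>\<^sub>M borel)" for D
    unfolding measurable_cong_sets[OF muB refl] \<phi>_def by measurable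
  have disint_int: "integrable \<sigma> (\<lambda>y. E y (\<lambda>x. D (x, y))) \<and>
      (\<integral>w. \<phi> D w \<partial>(\<mu> \<bind> K)) = (\<integral>y. E y (\<lambda>x. D (x, y)) \<partial>\<sigma>)"
    if Dm[measurable]: "D \<in> borel_measurable (borel \<Otimes>\<^sub>M borel)" and DL: "\<And>y. 1-lipschitz_on UNIV (\<lambda>x. D (x, y))"
      and Di: "integrable (\<mu> \<bind> K) (\<phi> D)" for D
  proof -
    note r1 = integral_bind_real[OF Kk \<phi>m[OF Dm] Di]
    define F where "F z = (\<integral>v. D z - D (v, snd z) \<partial>G (snd z))" for z
    have KF: "(\<integral>w. \<phi> D w \<partial>K z) = F z" for z
    proof -
      have pm: "(\<lambda>v. (z, v)) \<in> measurable (G (snd z)) (\<mu> \<Otimes>\<^sub>M borel)"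
        unfolding measurable_cong_sets[OF GP(2) muB]
        by (intro measurable_Pair measurable_const measurable_ident_sets) (auto simp: space_pair_measure)
      show ?thesis unfolding K_def F_def
        by (subst integral_distr[OF pm \<phi>m[OF Dm]]) (simp add: \<phi>_def)
    qed
    have Fmu: "F \<in> borel_measurable \<mu>"
    proof -
      have "(\<lambda>z. \<integral>w. \<phi> D w \<partial>K z) \<in> borel_measurable \<mu>"
        by (rule measurable_compose[OF Kk integral_measurable_subprob_algebra[OF \<phi>m[OF Dm]]])
      then show ?thesis using KF by simp
    qed
    have Fm: "F \<in> borel_measurable (borel \<Otimes>\<^sub>M borel)"
      using Fmu unfolding measurable_cong_sets[OF mu_sets refl] .
    have iF: "integrable \<mu> F" using r1(1) KF by simp
    have eF: "(\<integral>w. \<phi> D w \<partial>(\<mu> \<bind> K)) = (\<integral>z. F z \<partial>\<mu>)" using r1(2) KF by simp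
    have iF': "integrable (\<sigma> \<bind> L) F" using iF by (simp add: L_def disint[symmetric])
    note r2 = integral_bind_real[OF Lk Fm iF']
    have LF: "(\<integral>z. F z \<partial>L y) = E y (\<lambda>x. D (x, y))" for y
    proof -
      have pm: "(\<lambda>x. (x, y)) \<in> measurable (\<pi> y) (borel \<Otimes>\<^sub>M borel)"
        unfolding measurable_cong_sets[OF piP(2) refl] by measurable
      have iG: "integrable (G y) (\<lambda>v. D (v, y))" by (rule lip_integrable[OF DL GP(1) GP(2) Gint])
      have iP: "integrable (\<pi> y) (\<lambda>v. D (v, y))" by (rule lip_integrable[OF DL piP(1) piP(2) piint])
      have Fxy: "F (x, y) = D (x, y) - (\<integral>v. D (v, y) \<partial>G y)" for x
      proof -
        interpret prob_space "G y" by (rule GP(1))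
        have "F (x, y) = (\<integral>v. D (x, y) \<partial>G y) - (\<integral>v. D (v, y) \<partial>G y)"
          unfolding F_def by (simp add: Bochner_Integration.integral_diff[OF _ iG])
        then show ?thesis by (simp add: prob_space)
      qed
      have "(\<integral>z. F z \<partial>L y) = (\<integral>x. F (x, y) \<partial>\<pi> y)"
        unfolding L_def by (subst integral_distr[OF pm Fm]) simp
      also have "\<dots> = (\<integral>x. D (x, y) - (\<integral>v. D (v, y) \<partial>G y) \<partial>\<pi> y)" by (simp add: Fxy)
      also have "\<dots> = E y (\<lambda>x. D (x, y))"
      proof -
        interpret prob_space "\<pi> y" by (rule piP(1))
        show ?thesis unfolding E_def by (simp add: Bochner_Integration.integral_diff[OF iP] prob_space)
      qed
      finally show ?thesis .
    qed
    have "(\<integral>z. F z \<partial>\<mu>) = (\<integral>z. F z \<partial>(\<sigma> \<bind> L))" by (simp add: L_def disint[symmetric])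
    then show ?thesis using r2 LF eF by simp
  qed
  have hint: "integrable \<sigma> (h n)" for n
  proof -
    interpret prob_space \<sigma> by (rule sigma_prob)
    show ?thesis by (rule integrable_const_bound[where B="bnd n"]) (use hbound in auto)
  qed
  have Dnint: "integrable (\<mu> \<bind> K) (\<phi> (Dn n))" for n
  proof -
    interpret prob_space "\<mu> \<bind> K" by (rule Mprob)
    have Ms: "sets (\<mu> \<bind> K) = sets (\<mu> \<Otimes>\<^sub>M borel)"
      by (rule sets_bind_measurable[OF Kk]) (simp add: space_mu)
    have "\<phi> (Dn n) \<in> borel_measurable (\<mu> \<bind> K)"
      unfolding measurable_cong_sets[OF Ms refl] by (rule \<phi>m[OF Dnm])
    moreover have "\<bar>\<phi> (Dn n) w\<bar> \<le> 2 * bnd n" for w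
      using Dnb[of n "fst w"] Dnb[of n "(snd w, snd (fst w))"] unfolding \<phi>_def by linarith
    ultimately show ?thesis by (intro integrable_const_bound[where B="2 * bnd n"]) auto
  qed
  have vn: "(\<integral>w. \<phi> (Dn n) w \<partial>(\<mu> \<bind> K)) = (\<integral>y. h n y \<partial>\<sigma>)" for n
  proof -
    have "1-lipschitz_on UNIV (\<lambda>x. Dn n (x, y))" for y using DnD[of n] by (simp add: Dset_def Lip1_def)
    then have "(\<integral>w. \<phi> (Dn n) w \<partial>(\<mu> \<bind> K)) = (\<integral>y. E y (\<lambda>x. Dn n (x, y)) \<partial>\<sigma>)"
      using disint_int[OF Dnm _ Dnint] by blast
    then show ?thesis by (simp add: DnE)
  qed
  have ES: "ereal (E y f) \<le> S y" if "f \<in> Lip1" for f y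
    using SUP_upper[OF that, of "\<lambda>D. ereal (\<integral>p. D (fst p) - D (snd p) \<partial>(\<pi> y \<Otimes>\<^sub>M G y))"]
    lhsS[of y] pairE[OF that] by simp
  have Spt: "e2ennreal (S y) = (SUP n. ennreal (h n y))" for y
  proof (rule antisym)
    have "S y \<le> enn2ereal (SUP n. ennreal (h n y))"
      unfolding S_def
    proof (rule SUP_least)
      fix k
      have "ereal (E y (fam d k)) \<le> ereal (h k y)" using hge[of k k y] by (simp add: a_def)
      also have "\<dots> = enn2ereal (ennreal (h k y))" using h_nn by (simp add: enn2ereal_ennreal)
      also have "\<dots> \<le> enn2ereal (SUP n. ennreal (h n y))"
        unfolding less_eq_ennreal.rep_eq[symmetric] by (rule SUP_upper) simp
      finally show "ereal (E y (fam d k)) \<le> enn2ereal (SUP n. ennreal (h n y))" .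
    qed
    then have "e2ennreal (S y) \<le> e2ennreal (enn2ereal (SUP n. ennreal (h n y)))" by (rule e2ennreal_mono)
    then show "e2ennreal (S y) \<le> (SUP n. ennreal (h n y))" by (simp add: e2ennreal_enn2ereal)
    show "(SUP n. ennreal (h n y)) \<le> e2ennreal (S y)"
    proof (rule SUP_least)
      fix n
      obtain k where k: "k \<le> n" "h n y = a k y" using hmax_ex[of n "\<lambda>k. a k y"] by (auto simp: h_def)
      have "ereal (h n y) \<le> S y" using k ES[OF famL, of y k] by (simp add: a_def)
      then have "e2ennreal (ereal (h n y)) \<le> e2ennreal (S y)" by (rule e2ennreal_mono)
      then show "ennreal (h n y) \<le> e2ennreal (S y)" by (simp add: e2ennreal_ereal)
    qed
  qed
  have LHSeq: "(\<integral>\<^sup>+ y. e2ennreal (S y) \<partial>\<sigma>) = (SUP n. ennreal (\<integral>y. h n y \<partial>\<sigma>))"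
  proof -
    have "(\<integral>\<^sup>+ y. e2ennreal (S y) \<partial>\<sigma>) = (\<integral>\<^sup>+ y. (SUP n. ennreal (h n y)) \<partial>\<sigma>)" by (simp add: Spt)
    also have "\<dots> = (SUP n. (\<integral>\<^sup>+ y. ennreal (h n y) \<partial>\<sigma>))"
      by (rule nn_integral_monotone_convergence_SUP_AE) (auto intro!: AE_I2 ennreal_leI hinc)
    also have "\<dots> = (SUP n. ennreal (\<integral>y. h n y \<partial>\<sigma>))"
      by (rule SUP_cong[OF refl], rule nn_integral_eq_integral[OF hint]) (simp add: h_nn)
    finally show ?thesis .
  qed
  define R where "R = (SUP D\<in>Dset. ereal (\<integral>w. \<phi> D w \<partial>(\<mu> \<bind> K)))"
  have main: "enn2ereal (\<integral>\<^sup>+ y. e2ennreal (S y) \<partial>\<sigma>) = R"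
  proof (rule antisym)
    have vR: "ereal (\<integral>y. h n y \<partial>\<sigma>) \<le> R" for n
      unfolding R_def vn[symmetric] by (rule SUP_upper[OF DnD])
    have h0: "0 \<le> (\<integral>y. h 0 y \<partial>\<sigma>)" by (simp add: h_nn)
    then have "(0::ereal) \<le> ereal (\<integral>y. h 0 y \<partial>\<sigma>)" by simp
    then have R0: "0 \<le> R" using vR[of 0] by (rule order_trans)
    have "(SUP n. ennreal (\<integral>y. h n y \<partial>\<sigma>)) \<le> e2ennreal R"
    proof (rule SUP_least)
      fix n
      have "e2ennreal (ereal (\<integral>y. h n y \<partial>\<sigma>)) \<le> e2ennreal R" by (rule e2ennreal_mono[OF vR])
      then show "ennreal (\<integral>y. h n y \<partial>\<sigma>) \<le> e2ennreal R" by (simp add: e2ennreal_ereal)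
    qed
    then have "enn2ereal (SUP n. ennreal (\<integral>y. h n y \<partial>\<sigma>)) \<le> enn2ereal (e2ennreal R)"
      by (simp add: less_eq_ennreal.rep_eq[symmetric])
    then show "enn2ereal (\<integral>\<^sup>+ y. e2ennreal (S y) \<partial>\<sigma>) \<le> R"
      using LHSeq enn2ereal_e2ennreal[OF R0] by simp
    show "R \<le> enn2ereal (\<integral>\<^sup>+ y. e2ennreal (S y) \<partial>\<sigma>)"
      unfolding R_def
    proof (rule SUP_least)
      fix D :: "'x \<times> 'y \<Rightarrow> real" assume DD: "D \<in> Dset"
      have Dm: "D \<in> borel_measurable (borel \<Otimes>\<^sub>M borel)" and DL: "\<And>y. 1-lipschitz_on UNIV (\<lambda>x. D (x, y))"
        using DD by (auto simp: Dset_def Lip1_def)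
      show "ereal (\<integral>w. \<phi> D w \<partial>(\<mu> \<bind> K)) \<le> enn2ereal (\<integral>\<^sup>+ y. e2ennreal (S y) \<partial>\<sigma>)"
      proof (cases "integrable (\<mu> \<bind> K) (\<phi> D)")
        case False
        then show ?thesis by (simp add: not_integrable_integral_eq zero_ereal_def[symmetric] enn2ereal_nonneg)
      next
        case True
        define e where "e y = E y (\<lambda>x. D (x, y))" for y
        have ie: "integrable \<sigma> e" and ee: "(\<integral>w. \<phi> D w \<partial>(\<mu> \<bind> K)) = (\<integral>y. e y \<partial>\<sigma>)"
          using disint_int[OF Dm DL True] unfolding e_def[abs_def] by simp_all
        have ie0: "integrable \<sigma> (\<lambda>y. max (e y) 0)" by (intro integrable_max ie) simp
        have "(\<integral>y. e y \<partial>\<sigma>) \<le> (\<integral>y. max (e y) 0 \<partial>\<sigma>)" by (rule integral_mono[OF ie ie0]) simp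
        then have "ereal (\<integral>y. e y \<partial>\<sigma>) \<le> enn2ereal (ennreal (\<integral>y. max (e y) 0 \<partial>\<sigma>))"
          by (simp add: enn2ereal_ennreal)
        also have "ennreal (\<integral>y. max (e y) 0 \<partial>\<sigma>) = (\<integral>\<^sup>+ y. ennreal (max (e y) 0) \<partial>\<sigma>)"
          by (rule nn_integral_eq_integral[symmetric, OF ie0]) simp
        also have "\<dots> \<le> (\<integral>\<^sup>+ y. e2ennreal (S y) \<partial>\<sigma>)"
        proof (rule nn_integral_mono)
          fix y
          have "ereal (e y) \<le> S y" unfolding e_def by (rule ES) (simp add: Lip1_def DL)
          then have "e2ennreal (ereal (e y)) \<le> e2ennreal (S y)" by (rule e2ennreal_mono)
          then show "ennreal (max (e y) 0) \<le> e2ennreal (S y)" by (simp add: e2ennreal_ereal max_def)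
        qed
        finally show ?thesis using ee by (simp add: less_eq_ennreal.rep_eq[symmetric])
      qed
    qed
  qed
  have "(\<integral>\<^sup>+ y. e2ennreal (SUP D \<in> Lip1. ereal (\<integral> p. D (fst p) - D (snd p) \<partial>(\<pi> y \<Otimes>\<^sub>M G y))) \<partial>\<sigma>)
     = (\<integral>\<^sup>+ y. e2ennreal (S y) \<partial>\<sigma>)" by (simp add: lhsS)
  with main show ?thesis unfolding R_def \<phi>_def K_def by simp
qed

end
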